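(* Two permutations $\sigma\in\mathcal{S}_k$ and $\tau\in\mathcal{S}_{k'}$ satisfy $\mathrm{inv}_n(\sigma)=\mathrm{inv}_n(\tau)$ for every $n$ if and only if $k=k'$ and $\mathcal{J}(\sigma)=\mathcal{J}(\tau)$.
   Context: $\mathrm{inv}_n(\tau)$ is the number of involutions in $\mathcal{S}_n$ containing $\tau$ as a subsequence, where $\pi=\pi_1\ldots\pi_n$ contains $\tau=\tau_1\ldots\tau_k$ as a subsequence if there are indices $i_1<\cdots<i_k$ with $\pi_{i_r}=\tau_r$ for all $r$. The pattern of a word of $j$ distinct letters is its order-preserving relabeling by $\{1,\ldots,j\}$; the length-$j$ initial pattern of $\tau$ is the pattern of $\tau_1\ldots\tau_j$. The $j$-set $\mathcal{J}(\tau)$ of $\tau\in\mathcal{S}_k$ is the set consisting of $0$ together with all $j\in\{1,\ldots,k\}$ such that the length-$j$ initial pattern of $\tau$ is an involution in $\mathcal{S}_j$. *)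

theory Defs
  imports Main "HOL-Library.Sublist"
begin

text \<open>A permutation in S_k is represented in one-line notation as a list of length k
  whose entries are exactly 1..k, each once.\<close>
definition is_perm :: "nat \<Rightarrow> nat list \<Rightarrow> bool" where
  "is_perm k p \<longleftrightarrow> length p = k \<and> distinct p \<and> set p = {1..k}"

text \<open>An involution: pi(pi(i)) = i for all positions i (1-based values, 0-based indices).\<close>
definition is_involution :: "nat list \<Rightarrow> bool" where
  "is_involution p \<longleftrightarrow> (\<forall>i < length p. p ! (p ! i - 1) = i + 1)"

definition inv_count :: "nat \<Rightarrow> nat list \<Rightarrow> nat" where
  "inv_count n t = card {p. is_perm n p \<and> is_involution p \<and> subseq t p}"

text \<open>Order-preserving relabeling of a word of distinct letters by 1..j.\<close>
definition pattern :: "nat list \<Rightarrow> nat list" where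
  "pattern w = map (\<lambda>x. card {y \<in> set w. y \<le> x}) w"

definition jset :: "nat list \<Rightarrow> nat set" where
  "jset t = {0} \<union> {j \<in> {1..length t}. is_perm j (pattern (take j t)) \<and> is_involution (pattern (take j t))}"

end

theory Submission
  imports Defs
begin

fun Iv :: "nat \<Rightarrow> nat" where
  "Iv 0 = 1" | "Iv (Suc 0) = 1" | "Iv (Suc (Suc n)) = Iv (Suc n) + Suc n * Iv n"

definition hh :: "nat \<Rightarrow> nat \<Rightarrow> nat" where
  "hh d m = (m choose d) * Iv (m - d)"

definition cc :: "(nat \<Rightarrow> nat) \<Rightarrow> nat \<Rightarrow> nat" where
  "cc p m = (\<Sum>d\<le>m. p d * hh d m)"

definition Lop :: "(nat \<Rightarrow> nat) \<Rightarrow> nat \<Rightarrow> nat" where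
  "Lop p = (\<lambda>e. p e + p (Suc e) + e * p (e - 1))"

lemma Iv_Suc: "Iv (Suc m) = Iv m + m * Iv (m - 1)"
  by (cases m) auto

lemma hh_gt: "m < d \<Longrightarrow> hh d m = 0"
  by (simp add: hh_def)

lemma hh_diag: "hh d d = 1"
  by (simp add: hh_def)

lemma hh_0: "hh d 0 = (if d = 0 then 1 else 0)"
  by (simp add: hh_def)

lemma R2: "hh d (Suc m) = hh d m + Suc d * hh (Suc d) m + (if d = 0 then 0 else hh (d - 1) m)"
proof (cases d)
  case 0
  then show ?thesis by (simp add: hh_def Iv_Suc)
next
  case (Suc e)
  have pas: "(Suc m choose Suc e) = (m choose Suc e) + (m choose e)" by simp
  have key: "(m choose Suc e) * Iv (m - e) = (m choose Suc e) * Iv (m - Suc e) + Suc (Suc e) * (m choose Suc (Suc e)) * Iv (m - Suc (Suc e))"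
  proof (cases "m \<le> e")
    case True then show ?thesis by simp
  next
    case False
    then obtain r where r: "m - e = Suc r" by (metis Suc_diff_Suc not_le)
    have r2: "m - Suc e = r" "m - Suc (Suc e) = r - 1" using r by auto
    have a1: "Suc (Suc e) * (m choose Suc (Suc e)) = m * ((m - 1) choose Suc e)"
      by (rule binomial_absorption)
    have a2: "(m - Suc e) * (m choose Suc e) = m * ((m - 1) choose Suc e)"
      by (rule binomial_absorb_comp)
    have "(m choose Suc e) * Iv (m - e) = (m choose Suc e) * Iv r + (m choose Suc e) * r * Iv (r - 1)"
      using r by (simp add: Iv_Suc algebra_simps)
    also have "(m choose Suc e) * r = Suc (Suc e) * (m choose Suc (Suc e))"
      using a1 a2 r2 by (simp add: mult.commute)
    finally show ?thesis using r2 by simp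
  qed
  have "hh d (Suc m) = (m choose Suc e) * Iv (m - e) + (m choose e) * Iv (m - e)"
    using Suc by (simp add: hh_def pas algebra_simps)
  also have "\<dots> = hh d m + Suc d * hh (Suc d) m + hh (d - 1) m"
    using Suc key by (simp add: hh_def algebra_simps)
  finally show ?thesis using Suc by simp
qed

lemma cc_shift: "cc p (Suc m) = cc (Lop p) m"
proof -
  have "cc p (Suc m) = (\<Sum>d\<le>Suc m. p d * hh d m) + (\<Sum>d\<le>Suc m. Suc d * p d * hh (Suc d) m)
      + (\<Sum>d\<le>Suc m. p d * (if d = 0 then 0 else hh (d - 1) m))"
    unfolding cc_def R2 by (simp add: algebra_simps sum.distrib)
  also have "(\<Sum>d\<le>Suc m. p d * hh d m) = (\<Sum>d\<le>m. p d * hh d m)"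
    by (simp add: hh_gt)
  also have "(\<Sum>d\<le>Suc m. Suc d * p d * hh (Suc d) m) = (\<Sum>e\<le>m. e * p (e - 1) * hh e m)"
  proof -
    have "(\<Sum>e\<le>m. e * p (e - 1) * hh e m) = (\<Sum>e\<le>Suc m. e * p (e - 1) * hh e m)"
      by (simp add: hh_gt)
    also have "\<dots> = (\<Sum>d\<le>m. Suc d * p d * hh (Suc d) m)"
      by (subst sum.atMost_Suc_shift) simp
    also have "\<dots> = (\<Sum>d\<le>Suc m. Suc d * p d * hh (Suc d) m)"
      by (simp add: hh_gt)
    finally show ?thesis by simp
  qed
  also have "(\<Sum>d\<le>Suc m. p d * (if d = 0 then 0 else hh (d - 1) m)) = (\<Sum>e\<le>m. p (Suc e) * hh e m)"
    by (subst sum.atMost_Suc_shift) simp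
  finally show ?thesis
    unfolding cc_def Lop_def by (simp add: algebra_simps sum.distrib)
qed

lemma cc_shift_pow: "cc p (m + t) = cc ((Lop ^^ t) p) m"
proof (induction t arbitrary: p)
  case 0 then show ?case by simp
next
  case (Suc t)
  have "cc p (m + Suc t) = cc (Lop p) (m + t)" by (simp add: cc_shift)
  also have "\<dots> = cc ((Lop ^^ t) (Lop p)) m" by (rule Suc.IH)
  finally show ?case by (simp add: funpow_swap1)
qed

lemma hh_absorb: "Suc f * hh (Suc f) (Suc M) = Suc M * hh f M"
proof -
  have h: "Suc f * (Suc M choose Suc f) = Suc M * (M choose f)" by (rule Suc_times_binomial)
  have "Suc f * hh (Suc f) (Suc M) = (Suc f * (Suc M choose Suc f)) * Iv (M - f)"
    by (simp only: hh_def diff_Suc_Suc mult.assoc)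
  also have "\<dots> = Suc M * (M choose f) * Iv (M - f)" by (simp only: h)
  also have "\<dots> = Suc M * hh f M" by (simp add: hh_def algebra_simps)
  finally show ?thesis .
qed

lemma Lop_apply: "Lop p e = p e + p (Suc e) + e * p (e - 1)"
  by (simp add: Lop_def)

lemma cc_rec: "cc p (Suc M) = cc p M + M * cc p (M - 1) + cc (\<lambda>e. p (Suc e)) M"
proof -
  have "cc p (Suc M) = cc (Lop p) M" by (rule cc_shift)
  also have "\<dots> = cc p M + cc (\<lambda>e. p (Suc e)) M + (\<Sum>e\<le>M. e * p (e - 1) * hh e M)"
    unfolding cc_def Lop_def by (simp add: algebra_simps sum.distrib)
  also have "(\<Sum>e\<le>M. e * p (e - 1) * hh e M) = M * cc p (M - 1)"
  proof (cases M)
    case 0 then show ?thesis by simp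
  next
    case (Suc N)
    have "(\<Sum>e\<le>M. e * p (e - 1) * hh e M) = (\<Sum>e\<le>Suc N. p (e - 1) * (e * hh e (Suc N)))"
      using Suc by (simp add: algebra_simps)
    also have "\<dots> = (\<Sum>f\<le>N. p f * (Suc f * hh (Suc f) (Suc N)))"
      by (subst sum.atMost_Suc_shift) simp
    also have "\<dots> = (\<Sum>e\<le>N. p e * (Suc N * hh e N))"
      by (simp only: hh_absorb)
    also have "\<dots> = M * cc p (M - 1)"
      using Suc by (simp add: cc_def sum_distrib_left algebra_simps)
    finally show ?thesis .
  qed
  finally show ?thesis by simp
qed

lemma cc_split: "cc p m = (\<Sum>d<m. p d * hh d m) + p m"
  unfolding cc_def by (simp add: lessThan_Suc_atMost[symmetric] hh_diag)

lemma cc_ge: "p m \<le> cc p m"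
  using cc_split by simp

lemma cc_unique: assumes "\<And>m. cc p m = cc q m" shows "p d = q d"
proof (induction d rule: less_induct)
  case (less d)
  have "(\<Sum>e<d. p e * hh e d) = (\<Sum>e<d. q e * hh e d)"
    using less by simp
  with assms[of d] show ?case by (simp add: cc_split)
qed

lemma Lop_top:
  assumes "\<And>d. K < d \<Longrightarrow> p d = 0"
  shows "(\<forall>d. K + t < d \<longrightarrow> (Lop ^^ t) p d = 0) \<and> fact K * (Lop ^^ t) p (K + t) = fact (K + t) * p K"
proof (induction t)
  case 0 then show ?case using assms by simp
next
  case (Suc t)
  let ?q = "(Lop ^^ t) p"
  have s: "\<forall>d. K + t < d \<longrightarrow> ?q d = 0" and v: "fact K * ?q (K + t) = fact (K + t) * p K"
    using Suc by auto
  have s2: "\<forall>d. K + Suc t < d \<longrightarrow> Lop ?q d = 0"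
    using s by (auto simp only: Lop_apply)
  have "Lop ?q (K + Suc t) = Suc (K + t) * ?q (K + t)"
    using s by (simp only: Lop_apply) simp
  then have "fact K * Lop ?q (K + Suc t) = Suc (K + t) * (fact K * ?q (K + t))" by (simp only: mult.left_commute)
  also have "\<dots> = fact (K + Suc t) * p K" using v by (simp add: algebra_simps)
  finally show ?case using s2 by simp
qed

definition ind :: "nat \<Rightarrow> nat set \<Rightarrow> nat \<Rightarrow> nat" where
  "ind k J d = (if d \<le> k \<and> k - d \<in> J then 1 else 0)"

definition GG :: "nat \<Rightarrow> nat \<Rightarrow> nat set \<Rightarrow> nat" where
  "GG n k J = (if n < k then 0 else cc (ind k J) (n - k))"

lemma determ_le:
  assumes J: "J \<subseteq> {..k}" "0 \<in> J" and J': "J' \<subseteq> {..k'}" "0 \<in> J'" and kk: "k \<le> k'"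
    and eq: "\<And>n. GG n k J = GG n k' J'"
  shows "k = k' \<and> J = J'"
proof -
  define t where "t = k' - k"
  define p where "p = ind k J"
  define q where "q = ind k' J'"
  have k': "k' = k + t" using kk t_def by simp
  have "cc q m = cc ((Lop ^^ t) p) m" for m
  proof -
    have "cc q m = GG (m + k') k' J'" by (simp add: GG_def q_def)
    also have "\<dots> = GG (m + k') k J" by (simp add: eq)
    also have "\<dots> = cc p (m + t)" by (simp add: GG_def p_def k')
    also have "\<dots> = cc ((Lop ^^ t) p) m" by (rule cc_shift_pow)
    finally show ?thesis .
  qed
  then have qe: "\<And>d. q d = (Lop ^^ t) p d" by (rule cc_unique)
  show ?thesis
  proof (cases "t = 0")
    case True
    then have kk': "k' = k" using k' by simp
    have "j \<in> J \<longleftrightarrow> j \<in> J'" for j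
    proof (cases "j \<le> k")
      case True
      have "p (k - j) = q (k - j)" using qe \<open>t = 0\<close> by simp
      then show ?thesis using True kk' by (simp add: p_def q_def ind_def split: if_splits)
    next
      case False then show ?thesis using J J' kk' by auto
    qed
    then show ?thesis using kk' by auto
  next
    case False
    have pz: "p m = 0" if "m < t" for m
    proof -
      have "GG (m + k) k J = 0" using eq[of "m + k"] that k' by (simp add: GG_def)
      then have "cc p m = 0" by (simp add: GG_def p_def)
      then show ?thesis using cc_ge[of p m] by simp
    qed
    have pk: "p k = 1" using J by (simp add: p_def ind_def)
    have "t \<le> k" using pz pk by (metis not_le zero_neq_one)
    have sup: "\<And>d. k < d \<Longrightarrow> p d = 0" by (simp add: p_def ind_def)
    have "fact k * (Lop ^^ t) p (k + t) = fact (k + t) * p k"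
      using Lop_top[of k p t] sup by blast
    moreover have "(Lop ^^ t) p (k + t) = 1" using qe[of k'] J' k' by (simp add: q_def ind_def)
    ultimately have "fact k = (fact (k + t) :: nat)" using pk by simp
    moreover have "fact k < (fact (k + t) :: nat)"
      using False \<open>t \<le> k\<close> by (intro fact_less_mono_nat) auto
    ultimately show ?thesis by simp
  qed
qed

declare upt_Suc[simp del]

fun idx :: "'a list \<Rightarrow> 'a \<Rightarrow> nat" where
  "idx [] a = 0" | "idx (x#xs) a = (if x = a then 0 else Suc (idx xs a))"

lemma idx_nth: "distinct p \<Longrightarrow> i < length p \<Longrightarrow> idx p (p ! i) = i"
proof (induction p arbitrary: i)
  case Nil then show ?case by simp
next
  case (Cons y ys) then show ?case
    by (cases i) (auto simp: nth_mem)
qed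

lemma sorted_wrt_cong_set:
  "(\<And>a b. a \<in> set xs \<Longrightarrow> b \<in> set xs \<Longrightarrow> P a b = Q a b) \<Longrightarrow> sorted_wrt P xs = sorted_wrt Q xs"
  by (induction xs) auto

lemma subseq_set: "subseq s p \<Longrightarrow> set s \<subseteq> set p"
  by (auto elim: list_emb_set)

lemma subseq_idx:
  "distinct p \<Longrightarrow> distinct s \<Longrightarrow> set s \<subseteq> set p \<Longrightarrow>
   subseq s p \<longleftrightarrow> sorted_wrt (\<lambda>x y. idx p x < idx p y) s"
proof (induction p arbitrary: s)
  case Nil then show ?case by simp
next
  case (Cons y ys)
  show ?case
  proof (cases s)
    case Nil then show ?thesis by simp
  next
    case (Cons x xs)
    show ?thesis
    proof (cases "x = y")
      case True
      have yn: "y \<notin> set xs" using Cons.prems Cons True by auto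
      have sub: "set xs \<subseteq> set ys" using Cons.prems Cons yn by auto
      have ih: "subseq xs ys \<longleftrightarrow> sorted_wrt (\<lambda>x y. idx ys x < idx ys y) xs"
        using Cons.IH[of xs] Cons.prems Cons sub by auto
      have sh: "sorted_wrt (\<lambda>a b. idx (y#ys) a < idx (y#ys) b) xs = sorted_wrt (\<lambda>a b. idx ys a < idx ys b) xs"
        by (rule sorted_wrt_cong_set) (use yn in \<open>auto simp: idx.simps\<close>)
      have "sorted_wrt (\<lambda>a b. idx (y#ys) a < idx (y#ys) b) (y#xs) \<longleftrightarrow>
            sorted_wrt (\<lambda>a b. idx (y#ys) a < idx (y#ys) b) xs"
        using yn by auto
      then show ?thesis using ih sh Cons True by simp
    next
      case False
      show ?thesis
      proof (cases "y \<in> set xs")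
        case True
        have "y \<notin> set ys" using Cons.prems by simp
        then have "\<not> subseq (x#xs) ys" using subseq_set[of "x#xs" ys] True by auto
        moreover have "\<not> sorted_wrt (\<lambda>a b. idx (y#ys) a < idx (y#ys) b) (x#xs)"
          using True False by auto
        ultimately show ?thesis using Cons False by simp
      next
        case yn: False
        have sub: "set (x#xs) \<subseteq> set ys" using Cons.prems Cons yn False by auto
        have ih: "subseq (x#xs) ys \<longleftrightarrow> sorted_wrt (\<lambda>x y. idx ys x < idx ys y) (x#xs)"
          using Cons.IH[of "x#xs"] Cons.prems Cons sub by auto
        have sh: "sorted_wrt (\<lambda>a b. idx (y#ys) a < idx (y#ys) b) (x#xs) = sorted_wrt (\<lambda>a b. idx ys a < idx ys b) (x#xs)"
          by (rule sorted_wrt_cong_set) (use yn False in \<open>auto simp: idx.simps\<close>)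
        show ?thesis using ih sh Cons False by simp
      qed
    qed
  qed
qed

definition finv :: "nat \<Rightarrow> (nat \<Rightarrow> nat) \<Rightarrow> bool" where
  "finv n f \<longleftrightarrow> (\<forall>x. f (f x) = x) \<and> (\<forall>x. (x = 0 \<or> n < x) \<longrightarrow> f x = x)"

definition FA :: "nat \<Rightarrow> nat list \<Rightarrow> (nat \<Rightarrow> nat) set" where
  "FA n s = {f. finv n f \<and> sorted_wrt (\<lambda>x y. f x < f y) s}"

definition tof :: "nat \<Rightarrow> nat list \<Rightarrow> nat \<Rightarrow> nat" where
  "tof n p = (\<lambda>x. if 1 \<le> x \<and> x \<le> n then p ! (x - 1) else x)"

lemma finv_range: assumes "finv n f" "1 \<le> x" "x \<le> n" shows "1 \<le> f x \<and> f x \<le> n"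
proof (rule ccontr)
  assume "\<not> (1 \<le> f x \<and> f x \<le> n)"
  then have "f x = 0 \<or> n < f x" by auto
  then have "f (f x) = f x" using assms(1) unfolding finv_def by blast
  then have "f x = x" using assms(1) unfolding finv_def by auto
  then show False using assms \<open>\<not> (1 \<le> f x \<and> f x \<le> n)\<close> by simp
qed

lemma perm_nth_range: assumes "is_perm n p" "i < n" shows "1 \<le> p ! i \<and> p ! i \<le> n"
proof -
  have "p ! i \<in> set p" using assms by (intro nth_mem) (simp add: is_perm_def)
  then have "p ! i \<in> {1..n}" using assms(1) unfolding is_perm_def by blast
  then show ?thesis by simp
qed

lemma tof_finv: assumes "is_perm n p" "is_involution p" shows "finv n (tof n p)"
proof -
  have "tof n p (tof n p x) = x" for x
  proof (cases "1 \<le> x \<and> x \<le> n")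
    case True
    then have r: "1 \<le> p ! (x - 1) \<and> p ! (x - 1) \<le> n" using perm_nth_range[OF assms(1), of "x - 1"] by auto
    have "x - 1 < length p" using True assms(1) by (auto simp: is_perm_def)
    then have "p ! (p ! (x - 1) - 1) = x - 1 + 1" using assms(2)
      unfolding is_involution_def by blast
    then show ?thesis using True r by (simp add: tof_def)
  next
    case False
    then have e: "tof n p x = x" by (auto simp: tof_def)
    then show ?thesis by simp
  qed
  moreover have "(x = 0 \<or> n < x) \<longrightarrow> tof n p x = x" for x by (auto simp: tof_def)
  ultimately show ?thesis unfolding finv_def by blast
qed

lemma tof_idx: assumes "is_perm n p" "is_involution p" "1 \<le> x" "x \<le> n"
  shows "idx p x = tof n p x - 1"
proof -
  have r: "1 \<le> p ! (x - 1) \<and> p ! (x - 1) \<le> n" using perm_nth_range[OF assms(1), of "x - 1"] assms by auto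
  have "x - 1 < length p" using assms by (simp add: is_perm_def)
  then have "p ! (p ! (x - 1) - 1) = x - 1 + 1" using assms(2)
    unfolding is_involution_def by blast
  then have "x = p ! (tof n p x - 1)" using assms by (simp add: tof_def)
  moreover have "tof n p x - 1 < length p" using r assms(1,3,4) unfolding tof_def is_perm_def by auto
  ultimately show ?thesis using idx_nth[of p "tof n p x - 1"] assms(1) by (simp add: is_perm_def)
qed

lemma subseq_tof: assumes "is_perm n p" "is_involution p" "distinct s" "set s \<subseteq> {1..n}"
  shows "subseq s p \<longleftrightarrow> sorted_wrt (\<lambda>x y. tof n p x < tof n p y) s"
proof -
  have fin: "finv n (tof n p)" by (rule tof_finv[OF assms(1,2)])
  have "subseq s p \<longleftrightarrow> sorted_wrt (\<lambda>x y. idx p x < idx p y) s"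
    using subseq_idx[of p s] assms by (simp add: is_perm_def)
  also have "\<dots> \<longleftrightarrow> sorted_wrt (\<lambda>x y. tof n p x < tof n p y) s"
  proof (rule sorted_wrt_cong_set)
    fix a b assume ab: "a \<in> set s" "b \<in> set s"
    then have "1 \<le> a \<and> a \<le> n" "1 \<le> b \<and> b \<le> n" using assms(4) by auto
    moreover have "1 \<le> tof n p a" "1 \<le> tof n p b" using finv_range[OF fin] calculation by auto
    ultimately show "(idx p a < idx p b) = (tof n p a < tof n p b)"
      using tof_idx[OF assms(1,2)] by auto
  qed
  finally show ?thesis .
qed

lemma finv_perm: assumes "finv n f"
  shows "is_perm n (map f [1..<n+1]) \<and> is_involution (map f [1..<n+1]) \<and> tof n (map f [1..<n+1]) = f"
proof -
  let ?p = "map f [1..<n+1]"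
  have inv: "f (f x) = x" for x using assms by (simp add: finv_def)
  have inj: "inj f" by (rule injI) (metis inv)
  have d: "distinct ?p" unfolding distinct_map using inj inj_on_subset[OF inj] by simp
  have "set ?p = {1..n}"
  proof
    show "set ?p \<subseteq> {1..n}"
    proof
      fix y assume "y \<in> set ?p"
      then obtain x where x: "x \<in> {1..<n+1}" "y = f x" by (auto simp del: upt_Suc)
      then have "1 \<le> x" "x \<le> n" by auto
      then have "1 \<le> f x \<and> f x \<le> n" using finv_range[OF assms, of x] by blast
      then show "y \<in> {1..n}" using x(2) by simp
    qed
    show "{1..n} \<subseteq> set ?p"
    proof
      fix y assume y: "y \<in> {1..n}"
      then have "1 \<le> y" "y \<le> n" by auto
      then have "1 \<le> f y \<and> f y \<le> n" using finv_range[OF assms] by blast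
      then have "f y \<in> {1..<n+1}" by simp
      then have "f (f y) \<in> f ` set [1..<n+1]" by (simp del: upt_Suc)
      then show "y \<in> set ?p" using inv[of y] by (simp del: upt_Suc)
    qed
  qed
  then have per: "is_perm n ?p" using d unfolding is_perm_def by simp
  have "is_involution ?p" unfolding is_involution_def
  proof (intro allI impI)
    fix i assume "i < length ?p"
    then have i: "i < n" by simp
    then have r: "1 \<le> f (Suc i) \<and> f (Suc i) \<le> n" using finv_range[OF assms, of "Suc i"] by simp
    have "?p ! i = f (1 + i)" using i by (intro nth_map_upt) simp
    moreover have "f (Suc i) - 1 < n + 1 - 1" using r by auto
    then have "?p ! (f (Suc i) - 1) = f (1 + (f (Suc i) - 1))" by (rule nth_map_upt)
    then have "?p ! (f (Suc i) - 1) = f (f (Suc i))" using r by simp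
    ultimately show "?p ! (?p ! i - 1) = i + 1" using inv by simp
  qed
  moreover have "tof n ?p = f"
  proof
    fix x show "tof n ?p x = f x"
    proof (cases "1 \<le> x \<and> x \<le> n")
      case True
      then have "x - 1 < n + 1 - 1" by auto
      then have "?p ! (x - 1) = f (1 + (x - 1))" by (rule nth_map_upt)
      then show ?thesis using True by (simp add: tof_def)
    next
      case False
      then have x: "x = 0 \<or> n < x" by auto
      have h: "\<forall>x. (x = 0 \<or> n < x) \<longrightarrow> f x = x" using assms unfolding finv_def by (rule conjunct2)
      have "f x = x" using mp[OF spec[OF h, of x] x] .
      then show ?thesis using x by (auto simp: tof_def)
    qed
  qed
  ultimately show ?thesis using per by simp
qed

lemma conv: assumes "distinct s" "set s \<subseteq> {1..n}"
  shows "inv_count n s = card (FA n s)"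
proof -
  let ?A = "{p. is_perm n p \<and> is_involution p \<and> subseq s p}"
  have "bij_betw (tof n) ?A (FA n s)"
  proof (rule bij_betw_byWitness[where f' = "\<lambda>f. map f [1..<n+1]"])
    show "\<forall>p\<in>?A. map (tof n p) [1..<n+1] = p"
    proof
      fix p assume "p \<in> ?A"
      then have l: "length p = n" by (simp add: is_perm_def)
      show "map (tof n p) [1..<n+1] = p"
      proof (rule nth_equalityI)
        show "length (map (tof n p) [1..<n+1]) = length p" using l by simp
        fix i assume "i < length (map (tof n p) [1..<n+1])"
        then have i: "i < n" by (simp del: upt_Suc)
        then have "map (tof n p) [1..<n+1] ! i = tof n p (1 + i)" by (simp del: upt_Suc)
        then show "map (tof n p) [1..<n+1] ! i = p ! i" using i by (simp add: tof_def)
      qed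
    qed
    show "\<forall>f\<in>FA n s. tof n (map f [1..<n+1]) = f"
      using finv_perm by (simp add: FA_def)
    show "tof n ` ?A \<subseteq> FA n s"
      using tof_finv subseq_tof assms by (auto simp: FA_def)
    show "(\<lambda>f. map f [1..<n+1]) ` FA n s \<subseteq> ?A"
    proof
      fix q assume "q \<in> (\<lambda>f. map f [1..<n+1]) ` FA n s"
      then obtain f where f: "f \<in> FA n s" "q = map f [1..<n+1]" by auto
      have fi: "finv n f" and so: "sorted_wrt (\<lambda>x y. f x < f y) s" using f by (auto simp: FA_def)
      have pp: "is_perm n q" "is_involution q" "tof n q = f" using finv_perm[OF fi] f by auto
      have "subseq s q" using subseq_tof[OF pp(1,2) assms] pp(3) so by simp
      then show "q \<in> ?A" using pp by simp
    qed
  qed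
  then show ?thesis unfolding inv_count_def by (rule bij_betw_same_card)
qed

definition sh :: "nat \<Rightarrow> nat \<Rightarrow> nat" where
  "sh a x = (if a < x then x - 1 else x)"
definition ush :: "nat \<Rightarrow> nat \<Rightarrow> nat" where
  "ush a x = (if a \<le> x then Suc x else x)"

lemma sh_ush[simp]: "sh a (ush a x) = x"
  by (simp add: sh_def ush_def)
lemma ush_sh: "x \<noteq> a \<Longrightarrow> ush a (sh a x) = x"
  by (auto simp add: sh_def ush_def)
lemma ush_ne: "ush a x \<noteq> a"
  by (simp add: ush_def)
lemma ush_range: "1 \<le> x \<Longrightarrow> x \<le> N \<Longrightarrow> 1 \<le> ush a x \<and> ush a x \<le> Suc N"
  by (simp add: ush_def)
lemma sh_range: "1 \<le> a \<Longrightarrow> a \<le> Suc N \<Longrightarrow> 1 \<le> y \<Longrightarrow> y \<le> Suc N \<Longrightarrow> y \<noteq> a \<Longrightarrow> 1 \<le> sh a y \<and> sh a y \<le> N"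
  by (auto simp add: sh_def)
lemma sh_mono: "u \<noteq> a \<Longrightarrow> v \<noteq> a \<Longrightarrow> (sh a u < sh a v) = (u < v)"
  by (auto simp add: sh_def)
lemma sh_id: "x < a \<Longrightarrow> sh a x = x"
  by (simp add: sh_def)

definition Phi :: "nat \<Rightarrow> nat \<Rightarrow> (nat \<Rightarrow> nat) \<Rightarrow> nat \<Rightarrow> nat" where
  "Phi N a f = (\<lambda>x. if 1 \<le> x \<and> x \<le> N then sh a (f (ush a x)) else x)"
lemma Phi_out: "x = 0 \<or> N < x \<Longrightarrow> Phi N a f x = x"
  by (auto simp: Phi_def)

definition Psi :: "nat \<Rightarrow> nat \<Rightarrow> (nat \<Rightarrow> nat) \<Rightarrow> nat \<Rightarrow> nat" where
  "Psi N a g = (\<lambda>x. if x = a then Suc (Suc N) else if x = Suc (Suc N) then a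
     else if 1 \<le> x \<and> x \<le> Suc N then ush a (g (sh a x)) else x)"

lemma finv_inv: "finv n f \<Longrightarrow> f (f x) = x"
  by (simp add: finv_def)
lemma finv_out: assumes "finv n f" "x = 0 \<or> n < x" shows "f x = x"
proof -
  have h: "\<forall>x. (x = 0 \<or> n < x) \<longrightarrow> f x = x" using assms(1) unfolding finv_def by (rule conjunct2)
  show ?thesis using mp[OF spec[OF h, of x] assms(2)] .
qed

lemma finv_I: "(\<And>x. f (f x) = x) \<Longrightarrow> (\<And>x. x = 0 \<or> n < x \<Longrightarrow> f x = x) \<Longrightarrow> finv n f"
  unfolding finv_def by blast

context
  fixes N a :: nat and f :: "nat \<Rightarrow> nat"
  assumes fi: "finv (Suc (Suc N)) f" and fa: "f (Suc (Suc N)) = a" and a1: "1 \<le> a" and a2: "a \<le> Suc N"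
begin

lemma fa': "f a = Suc (Suc N)"
  using finv_inv[OF fi, of "Suc (Suc N)"] fa by simp

lemma f_mid: assumes "1 \<le> y" "y \<le> Suc N" "y \<noteq> a"
  shows "1 \<le> f y \<and> f y \<le> Suc N \<and> f y \<noteq> a"
proof -
  have r: "1 \<le> f y \<and> f y \<le> Suc (Suc N)" using finv_range[OF fi, of y] assms by simp
  have n1: "f y \<noteq> Suc (Suc N)"
  proof
    assume "f y = Suc (Suc N)"
    then have "f (f y) = a" using fa by simp
    then show False using finv_inv[OF fi, of y] assms(3) by simp
  qed
  have n2: "f y \<noteq> a"
  proof
    assume "f y = a"
    then have "f (f y) = Suc (Suc N)" using fa' by simp
    then show False using finv_inv[OF fi, of y] assms(2) by simp
  qed
  show ?thesis using r n1 n2 by simp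
qed

lemma Phi_mid: assumes "1 \<le> x" "x \<le> N"
  shows "1 \<le> Phi N a f x \<and> Phi N a f x \<le> N"
proof -
  have u: "1 \<le> ush a x \<and> ush a x \<le> Suc N" using ush_range assms by blast
  have "1 \<le> f (ush a x) \<and> f (ush a x) \<le> Suc N \<and> f (ush a x) \<noteq> a"
    using f_mid u ush_ne by blast
  then have "1 \<le> sh a (f (ush a x)) \<and> sh a (f (ush a x)) \<le> N"
    using sh_range[OF a1 a2] by blast
  then show ?thesis using assms by (simp add: Phi_def)
qed

lemma Phi_finv: "finv N (Phi N a f)"
proof (rule finv_I)
  fix x
  show "Phi N a f (Phi N a f x) = x"
  proof (cases "1 \<le> x \<and> x \<le> N")
    case True
    have u: "1 \<le> ush a x \<and> ush a x \<le> Suc N" using ush_range True by blast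
    have m: "1 \<le> f (ush a x) \<and> f (ush a x) \<le> Suc N \<and> f (ush a x) \<noteq> a"
      using f_mid u ush_ne by blast
    have r: "1 \<le> Phi N a f x \<and> Phi N a f x \<le> N" using Phi_mid True by blast
    obtain y where y: "y = Phi N a f x" by simp
    have "Phi N a f y = sh a (f (ush a y))"
      using r y by (simp add: Phi_def)
    also have "y = sh a (f (ush a x))" using True y by (simp add: Phi_def)
    also have "ush a (sh a (f (ush a x))) = f (ush a x)" using m ush_sh by blast
    also have "f (f (ush a x)) = ush a x" using finv_inv[OF fi] .
    finally have "Phi N a f (sh a (f (ush a x))) = x" by simp
    moreover have "Phi N a f x = sh a (f (ush a x))" using True by (simp add: Phi_def)
    ultimately show ?thesis by simp
  next
    case False
    then have "x = 0 \<or> N < x" by auto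
    then have "Phi N a f x = x" by (rule Phi_out)
    then show ?thesis by simp
  qed
next
  fix x :: nat assume "x = 0 \<or> N < x" then show "Phi N a f x = x" by (auto simp: Phi_def)
qed

lemma Psi_Phi: "Psi N a (Phi N a f) = f"
proof
  fix x
  show "Psi N a (Phi N a f) x = f x"
  proof (cases "x = a")
    case True then show ?thesis using fa' by (simp add: Psi_def)
  next
    case xa: False
    show ?thesis
    proof (cases "x = Suc (Suc N)")
      case True then show ?thesis using fa xa by (simp add: Psi_def)
    next
      case xn: False
      show ?thesis
      proof (cases "1 \<le> x \<and> x \<le> Suc N")
        case True
        have s: "1 \<le> sh a x \<and> sh a x \<le> N" using sh_range[OF a1 a2] True xa by blast
        have m: "1 \<le> f x \<and> f x \<le> Suc N \<and> f x \<noteq> a" using f_mid True xa by blast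
        have "Psi N a (Phi N a f) x = ush a (Phi N a f (sh a x))"
          using True xa xn by (simp add: Psi_def)
        also have "Phi N a f (sh a x) = sh a (f (ush a (sh a x)))" using s by (simp add: Phi_def)
        also have "ush a (sh a x) = x" using ush_sh xa by blast
        also have "ush a (sh a (f x)) = f x" using ush_sh m by blast
        finally show ?thesis .
      next
        case False
        then have xo: "x = 0 \<or> Suc (Suc N) < x" using xn by auto
        then have "f x = x" by (rule finv_out[OF fi])
        then show ?thesis using xo xa xn by (auto simp add: Psi_def)
      qed
    qed
  qed
qed

end


context
  fixes N a :: nat and g :: "nat \<Rightarrow> nat"
  assumes gi: "finv N g" and a1: "1 \<le> a" and a2: "a \<le> Suc N"
begin

lemma Psi_mid: assumes "1 \<le> x" "x \<le> Suc N" "x \<noteq> a"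
  shows "Psi N a g x = ush a (g (sh a x)) \<and> 1 \<le> Psi N a g x \<and> Psi N a g x \<le> Suc N \<and> Psi N a g x \<noteq> a"
proof -
  have s: "1 \<le> sh a x \<and> sh a x \<le> N" using sh_range[OF a1 a2] assms by blast
  then have "1 \<le> g (sh a x) \<and> g (sh a x) \<le> N" using finv_range[OF gi] by blast
  then have "1 \<le> ush a (g (sh a x)) \<and> ush a (g (sh a x)) \<le> Suc N" using ush_range by blast
  moreover have e: "Psi N a g x = ush a (g (sh a x))" using assms by (simp add: Psi_def)
  ultimately show ?thesis using ush_ne by simp
qed

lemma Psi_finv: "finv (Suc (Suc N)) (Psi N a g) \<and> Psi N a g (Suc (Suc N)) = a"
proof
  show "Psi N a g (Suc (Suc N)) = a" using a2 by (simp add: Psi_def)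
  show "finv (Suc (Suc N)) (Psi N a g)"
  proof (rule finv_I)
    fix x
    show "Psi N a g (Psi N a g x) = x"
    proof (cases "x = a")
      case True then show ?thesis using a2 by (simp add: Psi_def)
    next
      case xa: False
      show ?thesis
      proof (cases "x = Suc (Suc N)")
        case True then show ?thesis using a2 by (simp add: Psi_def)
      next
        case xn: False
        show ?thesis
        proof (cases "1 \<le> x \<and> x \<le> Suc N")
          case True
          have m: "Psi N a g x = ush a (g (sh a x)) \<and> 1 \<le> Psi N a g x \<and> Psi N a g x \<le> Suc N \<and> Psi N a g x \<noteq> a"
            using Psi_mid True xa by blast
          obtain y where y: "y = Psi N a g x" by simp
          have my: "Psi N a g y = ush a (g (sh a y))" using Psi_mid m y by blast
          have "sh a y = g (sh a x)" using m y by simp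
          then have "Psi N a g y = ush a (sh a x)" using my finv_inv[OF gi] by simp
          also have "\<dots> = x" using ush_sh xa by blast
          finally show ?thesis using y by simp
        next
          case False
          then have xo: "x = 0 \<or> Suc (Suc N) < x" using xn by auto
          then have "Psi N a g x = x" using xa by (auto simp: Psi_def)
          then show ?thesis by simp
        qed
      qed
    qed
  next
    fix x :: nat assume "x = 0 \<or> Suc (Suc N) < x"
    then show "Psi N a g x = x" using a1 a2 by (auto simp: Psi_def)
  qed
qed

lemma Phi_Psi: "Phi N a (Psi N a g) = g"
proof
  fix x
  show "Phi N a (Psi N a g) x = g x"
  proof (cases "1 \<le> x \<and> x \<le> N")
    case True
    have u: "1 \<le> ush a x \<and> ush a x \<le> Suc N" using ush_range True by blast
    have "Psi N a g (ush a x) = ush a (g (sh a (ush a x)))" using Psi_mid u ush_ne by blast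
    then have "Psi N a g (ush a x) = ush a (g x)" by simp
    then show ?thesis using True by (simp add: Phi_def)
  next
    case False
    then have "x = 0 \<or> N < x" by auto
    then show ?thesis using Phi_out finv_out[OF gi] by metis
  qed
qed

end

context
  fixes N a :: nat and f :: "nat \<Rightarrow> nat"
  assumes fi: "finv (Suc (Suc N)) f" and fa: "f (Suc (Suc N)) = a" and a1: "1 \<le> a" and a2: "a \<le> Suc N"
begin

lemma sorted_Phi: assumes "set xs \<subseteq> {1..Suc N}" "a \<notin> set xs"
  shows "sorted_wrt (\<lambda>x y. f x < f y) xs \<longleftrightarrow> sorted_wrt (\<lambda>x y. Phi N a f x < Phi N a f y) (map (sh a) xs)"
proof -
  have "sorted_wrt (\<lambda>x y. Phi N a f x < Phi N a f y) (map (sh a) xs) \<longleftrightarrow>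
        sorted_wrt (\<lambda>x y. Phi N a f (sh a x) < Phi N a f (sh a y)) xs"
    by (simp add: sorted_wrt_map)
  also have "\<dots> \<longleftrightarrow> sorted_wrt (\<lambda>x y. f x < f y) xs"
  proof (rule sorted_wrt_cong_set)
    have key: "Phi N a f (sh a x) = sh a (f x) \<and> f x \<noteq> a" if "x \<in> set xs" for x
    proof -
      have x: "1 \<le> x" "x \<le> Suc N" "x \<noteq> a" using that assms by auto
      have s: "1 \<le> sh a x \<and> sh a x \<le> N" using sh_range[OF a1 a2] x by blast
      have "Phi N a f (sh a x) = sh a (f (ush a (sh a x)))" using s by (simp add: Phi_def)
      also have "ush a (sh a x) = x" using ush_sh x by blast
      finally show ?thesis using f_mid[OF fi fa a1 a2] x by blast
    qed
    fix x y assume "x \<in> set xs" "y \<in> set xs"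
    then show "(Phi N a f (sh a x) < Phi N a f (sh a y)) = (f x < f y)"
      using key sh_mono by metis
  qed
  finally show ?thesis by simp
qed

lemma sorted_last: assumes "set xs \<subseteq> {1..Suc N}" "a \<notin> set xs"
  shows "sorted_wrt (\<lambda>x y. f x < f y) (xs @ [a]) \<longleftrightarrow> sorted_wrt (\<lambda>x y. f x < f y) xs"
proof -
  have "f x < f a" if "x \<in> set xs" for x
  proof -
    have x: "1 \<le> x" "x \<le> Suc N" "x \<noteq> a" using that assms by auto
    then have "f x \<le> Suc N" using f_mid[OF fi fa a1 a2] by blast
    then show ?thesis using fa'[OF fi fa a1 a2] by simp
  qed
  then show ?thesis by (auto simp: sorted_wrt_append)
qed

end

lemma bij_B:
  assumes a: "1 \<le> a" "a \<le> Suc N" and xs: "set xs \<subseteq> {1..Suc N}" "a \<notin> set xs" and s: "s = xs \<or> s = xs @ [a]"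
  shows "bij_betw (Phi N a) {f \<in> FA (Suc (Suc N)) s. f (Suc (Suc N)) = a} (FA N (map (sh a) xs))"
proof (rule bij_betw_byWitness[where f' = "Psi N a"])
  have sl: "sorted_wrt (\<lambda>x y. f x < f y) s \<longleftrightarrow> sorted_wrt (\<lambda>x y. f x < f y) xs"
    if "finv (Suc (Suc N)) f" "f (Suc (Suc N)) = a" for f
    using s sorted_last[OF that a xs] by auto
  show "\<forall>f\<in>{f \<in> FA (Suc (Suc N)) s. f (Suc (Suc N)) = a}. Psi N a (Phi N a f) = f"
    using Psi_Phi a by (auto simp: FA_def)
  show "\<forall>g\<in>FA N (map (sh a) xs). Phi N a (Psi N a g) = g"
    using Phi_Psi a by (auto simp: FA_def)
  show "Phi N a ` {f \<in> FA (Suc (Suc N)) s. f (Suc (Suc N)) = a} \<subseteq> FA N (map (sh a) xs)"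
  proof
    fix h assume "h \<in> Phi N a ` {f \<in> FA (Suc (Suc N)) s. f (Suc (Suc N)) = a}"
    then obtain f where f: "finv (Suc (Suc N)) f" "f (Suc (Suc N)) = a" "sorted_wrt (\<lambda>x y. f x < f y) s"
      and h: "h = Phi N a f" by (auto simp: FA_def)
    have "sorted_wrt (\<lambda>x y. h x < h y) (map (sh a) xs)"
      using sorted_Phi[OF f(1,2) a xs] sl[OF f(1,2)] f(3) h by simp
    moreover have "finv N h" using Phi_finv[OF f(1,2) a] h by simp
    ultimately show "h \<in> FA N (map (sh a) xs)" by (simp add: FA_def)
  qed
  show "Psi N a ` FA N (map (sh a) xs) \<subseteq> {f \<in> FA (Suc (Suc N)) s. f (Suc (Suc N)) = a}"
  proof
    fix h assume "h \<in> Psi N a ` FA N (map (sh a) xs)"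
    then obtain g where g: "finv N g" "sorted_wrt (\<lambda>x y. g x < g y) (map (sh a) xs)"
      and h: "h = Psi N a g" by (auto simp: FA_def)
    have hf: "finv (Suc (Suc N)) h" "h (Suc (Suc N)) = a" using Psi_finv[OF g(1) a] h by auto
    have "Phi N a h = g" using Phi_Psi[OF g(1) a] h by simp
    then have "sorted_wrt (\<lambda>x y. h x < h y) xs" using sorted_Phi[OF hf a xs] g(2) by simp
    then have "sorted_wrt (\<lambda>x y. h x < h y) s" using sl[OF hf] by simp
    then show "h \<in> {f \<in> FA (Suc (Suc N)) s. f (Suc (Suc N)) = a}" using hf by (simp add: FA_def)
  qed
qed

lemma B_empty:
  assumes "a \<in> set s" "a \<noteq> last s" "set s \<subseteq> {1..n}" "f \<in> FA n s" "f n = a"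
  shows False
proof -
  obtain us rest where sp: "s = us @ a # rest" using split_list[OF assms(1)] by blast
  have "rest \<noteq> []" using sp assms(2) by auto
  then obtain v ws where r: "rest = v # ws" by (cases rest) auto
  have fi: "finv n f" and so: "sorted_wrt (\<lambda>x y. f x < f y) s" using assms(4) by (auto simp: FA_def)
  have "f a < f v" using so sp r by (simp add: sorted_wrt_append)
  moreover have "f a = n" using finv_inv[OF fi, of n] assms(5) by simp
  moreover have "v \<in> {1..n}" using assms(3) sp r by auto
  then have "f v \<le> n" using finv_range[OF fi, of v] by simp
  ultimately show False by simp
qed

lemma FA_finite: "finite (FA n s)"
proof -
  have "FA n s \<subseteq> tof n ` {p. set p \<subseteq> {1..n} \<and> length p = n}"
  proof
    fix f assume "f \<in> FA n s"
    then have fi: "finv n f" by (simp add: FA_def)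
    have pp: "is_perm n (map f [1..<n+1])" "tof n (map f [1..<n+1]) = f" using finv_perm[OF fi] by auto
    have "set (map f [1..<n+1]) \<subseteq> {1..n} \<and> length (map f [1..<n+1]) = n"
      using pp(1) by (simp add: is_perm_def)
    then have m: "map f [1..<n+1] \<in> {p. set p \<subseteq> {1..n} \<and> length p = n}" by simp
    show "f \<in> tof n ` {p. set p \<subseteq> {1..n} \<and> length p = n}" by (rule image_eqI[where x="map f [1..<n+1]"]) (use pp(2) m in simp_all)
  qed
  moreover have "finite (tof n ` {p. set p \<subseteq> {1..n} \<and> length p = n})"
    by (intro finite_imageI finite_lists_length_eq) simp
  ultimately show ?thesis by (rule finite_subset)
qed

lemma FA_top: "{f \<in> FA (Suc M) s. f (Suc M) = Suc M} = FA M s"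
proof -
  have "finv (Suc M) f \<and> f (Suc M) = Suc M \<longleftrightarrow> finv M f" for f
  proof
    assume h: "finv (Suc M) f \<and> f (Suc M) = Suc M"
    show "finv M f"
    proof (rule finv_I)
      fix x show "f (f x) = x" using finv_inv[OF conjunct1[OF h]] .
    next
      fix x :: nat assume x: "x = 0 \<or> M < x"
      show "f x = x"
      proof (cases "x = Suc M")
        case True then show ?thesis using h by simp
      next
        case False
        then have "x = 0 \<or> Suc M < x" using x by auto
        then show ?thesis using finv_out[OF conjunct1[OF h]] by simp
      qed
    qed
  next
    assume h: "finv M f"
    have "finv (Suc M) f"
    proof (rule finv_I)
      fix x show "f (f x) = x" using finv_inv[OF h] .
    next
      fix x :: nat assume x: "x = 0 \<or> Suc M < x"
      then have "x = 0 \<or> M < x" by auto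
      then show "f x = x" using finv_out[OF h] by simp
    qed
    moreover have "f (Suc M) = Suc M" using finv_out[OF h, of "Suc M"] by simp
    ultimately show "finv (Suc M) f \<and> f (Suc M) = Suc M" by simp
  qed
  then show ?thesis by (auto simp: FA_def)
qed

lemma card_fibres: "card (FA (Suc M) s) = (\<Sum>a\<in>{1..Suc M}. card {f \<in> FA (Suc M) s. f (Suc M) = a})"
proof -
  have "FA (Suc M) s = (\<Union>a\<in>{1..Suc M}. {f \<in> FA (Suc M) s. f (Suc M) = a})"
  proof
    show "FA (Suc M) s \<subseteq> (\<Union>a\<in>{1..Suc M}. {f \<in> FA (Suc M) s. f (Suc M) = a})"
    proof
      fix f assume f: "f \<in> FA (Suc M) s"
      then have "finv (Suc M) f" by (simp add: FA_def)
      then have "f (Suc M) \<in> {1..Suc M}" using finv_range[of "Suc M" f "Suc M"] by simp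
      then show "f \<in> (\<Union>a\<in>{1..Suc M}. {f \<in> FA (Suc M) s. f (Suc M) = a})" using f by blast
    qed
    show "(\<Union>a\<in>{1..Suc M}. {f \<in> FA (Suc M) s. f (Suc M) = a}) \<subseteq> FA (Suc M) s" by (rule UN_least) (rule subsetI, simp)
  qed
  then have "card (FA (Suc M) s) = card (\<Union>a\<in>{1..Suc M}. {f \<in> FA (Suc M) s. f (Suc M) = a})" by simp
  also have "\<dots> = (\<Sum>a\<in>{1..Suc M}. card {f \<in> FA (Suc M) s. f (Suc M) = a})"
  proof (rule card_UN_disjoint)
    show "finite {1..Suc M}" by simp
    show "\<forall>i\<in>{1..Suc M}. finite {f \<in> FA (Suc M) s. f (Suc M) = i}"
      using FA_finite[of "Suc M" s] by simp
    show "\<forall>i\<in>{1..Suc M}. \<forall>j\<in>{1..Suc M}. i \<noteq> j \<longrightarrow>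
      {f \<in> FA (Suc M) s. f (Suc M) = i} \<inter> {f \<in> FA (Suc M) s. f (Suc M) = j} = {}" by blast
  qed
  finally show ?thesis .
qed


lemma perm_set: "is_perm k s \<Longrightarrow> set s = {1..k}"
  by (simp add: is_perm_def)

lemma perm_last: assumes "is_perm k s" "k \<noteq> 0"
  shows "s = butlast s @ [last s] \<and> last s \<notin> set (butlast s) \<and> last s \<in> {1..k} \<and> set (butlast s) \<subseteq> {1..k}"
proof -
  have ne: "s \<noteq> []" using assms by (auto simp: is_perm_def)
  have e: "s = butlast s @ [last s]" using ne by simp
  have d: "distinct s" using assms by (simp add: is_perm_def)
  then have "distinct (butlast s @ [last s])" using e by simp
  then have n: "last s \<notin> set (butlast s)" by simp
  have "last s \<in> set s" using ne by simp
  moreover have "set (butlast s) \<subseteq> set s" by (rule in_set_butlastD[THEN subsetI])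
  ultimately show ?thesis using e n perm_set[OF assms(1)] by auto
qed

lemma card_B:
  assumes p: "is_perm k s" and kM: "k \<le> Suc N" and a: "1 \<le> a" "a \<le> Suc N"
  shows "card {f \<in> FA (Suc (Suc N)) s. f (Suc (Suc N)) = a} =
    (if a \<le> k then (if a = last s then card (FA N (map (sh (last s)) (butlast s))) else 0) else card (FA N s))"
proof (cases "a \<le> k")
  case False
  have ss: "set s = {1..k}" using perm_set[OF p] .
  have xs: "set s \<subseteq> {1..Suc N}" "a \<notin> set s" using ss kM False by auto
  have "map (sh a) s = s" by (rule map_idI) (use ss False in \<open>auto intro: sh_id\<close>)
  then have "bij_betw (Phi N a) {f \<in> FA (Suc (Suc N)) s. f (Suc (Suc N)) = a} (FA N s)"
    using bij_B[OF a xs] by simp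
  then show ?thesis using False by (simp add: bij_betw_same_card)
next
  case True
  show ?thesis
  proof (cases "a = last s")
    case al: True
    have k0: "k \<noteq> 0" using True a by simp
    note pl = perm_last[OF p k0]
    have xs: "set (butlast s) \<subseteq> {1..Suc N}" "a \<notin> set (butlast s)" using pl kM al by auto
    have "s = butlast s \<or> s = butlast s @ [a]" using pl al by simp
    then have "bij_betw (Phi N a) {f \<in> FA (Suc (Suc N)) s. f (Suc (Suc N)) = a} (FA N (map (sh a) (butlast s)))"
      using bij_B[OF a xs] by simp
    then show ?thesis using True al by (simp add: bij_betw_same_card)
  next
    case False
    have "a \<in> set s" using True a perm_set[OF p] by simp
    moreover have "set s \<subseteq> {1..Suc (Suc N)}" using perm_set[OF p] kM by auto
    ultimately have e: "{f \<in> FA (Suc (Suc N)) s. f (Suc (Suc N)) = a} = {}"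
      using B_empty[of a s "Suc (Suc N)"] False by blast
    show ?thesis unfolding e using True False by simp
  qed
qed

lemma card_rec:
  assumes p: "is_perm k s" and kM: "k < Suc M"
  shows "card (FA (Suc M) s) = card (FA M s) + (M - k) * card (FA (M - 1) s)
     + (if k = 0 then 0 else card (FA (M - 1) (map (sh (last s)) (butlast s))))"
proof -
  let ?B = "\<lambda>a. card {f \<in> FA (Suc M) s. f (Suc M) = a}"
  have "card (FA (Suc M) s) = (\<Sum>a\<in>{1..Suc M}. ?B a)" by (rule card_fibres)
  also have "{1..Suc M} = insert (Suc M) {1..M}" by auto
  also have "(\<Sum>a\<in>insert (Suc M) {1..M}. ?B a) = ?B (Suc M) + (\<Sum>a\<in>{1..M}. ?B a)"
    by (rule sum.insert) auto
  also have "?B (Suc M) = card (FA M s)" by (simp add: FA_top)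
  also have "(\<Sum>a\<in>{1..M}. ?B a) = (M - k) * card (FA (M - 1) s)
     + (if k = 0 then 0 else card (FA (M - 1) (map (sh (last s)) (butlast s))))"
  proof (cases M)
    case 0 then show ?thesis using kM by simp
  next
    case (Suc N)
    let ?X = "card (FA N (map (sh (last s)) (butlast s)))"
    let ?Y = "card (FA N s)"
    have kN: "k \<le> Suc N" using kM Suc by simp
    have "(\<Sum>a\<in>{1..M}. ?B a) = (\<Sum>a\<in>{1..Suc N}. (if a \<le> k then (if a = last s then ?X else 0) else ?Y))"
      using card_B[OF p kN] Suc by (intro sum.cong) auto
    also have "{1..Suc N} = {1..k} \<union> {Suc k..Suc N}" using kN by auto
    also have "(\<Sum>a\<in>{1..k} \<union> {Suc k..Suc N}. (if a \<le> k then (if a = last s then ?X else 0) else ?Y))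
       = (\<Sum>a\<in>{1..k}. (if a \<le> k then (if a = last s then ?X else 0) else ?Y))
       + (\<Sum>a\<in>{Suc k..Suc N}. (if a \<le> k then (if a = last s then ?X else 0) else ?Y))"
      by (rule sum.union_disjoint) auto
    also have "(\<Sum>a\<in>{1..k}. (if a \<le> k then (if a = last s then ?X else 0) else ?Y))
       = (\<Sum>a\<in>{1..k}. (if a = last s then ?X else 0))" by (intro sum.cong) auto
    also have "\<dots> = (if last s \<in> {1..k} then ?X else 0)" by (rule sum.delta) simp
    also have "(if last s \<in> {1..k} then ?X else 0) = (if k = 0 then 0 else ?X)"
      using perm_last[OF p] by auto
    also have "(\<Sum>a\<in>{Suc k..Suc N}. (if a \<le> k then (if a = last s then ?X else 0) else ?Y))
       = (\<Sum>a\<in>{Suc k..Suc N}. ?Y)" by (intro sum.cong) auto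
    also have "\<dots> = (Suc N - k) * ?Y" by simp
    finally show ?thesis using Suc by simp
  qed
  finally show ?thesis by simp
qed

lemma pattern_mono:
  assumes "\<And>u v. u \<in> set w \<Longrightarrow> v \<in> set w \<Longrightarrow> (f u \<le> f v) = (u \<le> v)"
  shows "pattern (map f w) = pattern w"
proof -
  have inj: "inj_on f (set w)"
  proof (rule inj_onI)
    fix u v assume uv: "u \<in> set w" "v \<in> set w" "f u = f v"
    then have "u \<le> v" "v \<le> u" using assms[of u v] assms[of v u] by auto
    then show "u = v" by simp
  qed
  have "card {y \<in> f ` set w. y \<le> f x} = card {y \<in> set w. y \<le> x}" if x: "x \<in> set w" for x
  proof -
    have "{y \<in> f ` set w. y \<le> f x} = f ` {y \<in> set w. y \<le> x}"
      using assms x by auto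
    moreover have "inj_on f {y \<in> set w. y \<le> x}" using inj by (rule inj_on_subset) auto
    ultimately show ?thesis by (simp add: card_image)
  qed
  then show ?thesis unfolding pattern_def by simp
qed

lemma pattern_perm: assumes "is_perm k s" shows "pattern s = s"
proof -
  have ss: "set s = {1..k}" using assms by (simp add: is_perm_def)
  have "card {y \<in> set s. y \<le> x} = x" if "x \<in> set s" for x
  proof -
    have "{y \<in> set s. y \<le> x} = {1..x}" using ss that by auto
    then show ?thesis by simp
  qed
  then show ?thesis unfolding pattern_def by (simp add: map_idI)
qed

lemma jset_k: assumes "is_perm k s" shows "k \<in> jset s \<longleftrightarrow> is_involution s"
proof (cases "k = 0")
  case True
  then have "s = []" using assms by (simp add: is_perm_def)
  then show ?thesis using True by (simp add: jset_def is_involution_def)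
next
  case False
  have l: "length s = k" using assms by (simp add: is_perm_def)
  have "k \<in> jset s \<longleftrightarrow> is_perm k (pattern s) \<and> is_involution (pattern s)"
    using False l by (simp add: jset_def)
  then show ?thesis using pattern_perm[OF assms] assms by simp
qed

lemma jset_sub: "jset s \<subseteq> {..length s}" "0 \<in> jset s"
  by (auto simp: jset_def)

lemma sh_inj: "u \<noteq> a \<Longrightarrow> v \<noteq> a \<Longrightarrow> sh a u = sh a v \<Longrightarrow> u = v"
  by (auto simp: sh_def split: if_splits)

lemma jset_prime:
  assumes p: "is_perm k s" and k0: "k \<noteq> 0"
  shows "is_perm (k - 1) (map (sh (last s)) (butlast s)) \<and>
    (\<forall>j<k. j \<in> jset (map (sh (last s)) (butlast s)) \<longleftrightarrow> j \<in> jset s)"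
proof -
  let ?a = "last s"
  let ?s = "map (sh ?a) (butlast s)"
  note pl = perm_last[OF p k0]
  have e: "s = butlast s @ [?a]" using pl by (rule conjunct1)
  have n: "?a \<notin> set (butlast s)" and ain: "?a \<in> {1..k}" using pl by blast+
  have ls: "length s = k" using p by (simp add: is_perm_def)
  have ds: "distinct s" using p by (simp add: is_perm_def)
  have sb: "set (butlast s) = {1..k} - {?a}"
  proof -
    have "set (butlast s @ [?a]) = set s" using e[symmetric] by (rule arg_cong)
    then have "set s = set (butlast s) \<union> {?a}" by simp
    then show ?thesis using perm_set[OF p] n by auto
  qed
  have a: "1 \<le> ?a" "?a \<le> Suc (k - 1)" using ain k0 by auto
  have inj: "inj_on (sh ?a) (set (butlast s))"
  proof (rule inj_onI)
    fix u v assume "u \<in> set (butlast s)" "v \<in> set (butlast s)" "sh ?a u = sh ?a v"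
    then show "u = v" using sh_inj[of u ?a v] n by auto
  qed
  have d: "distinct ?s" using inj distinct_butlast[OF ds] by (simp add: distinct_map)
  have "set ?s = {1..k - 1}"
  proof
    show "set ?s \<subseteq> {1..k - 1}"
    proof
      fix v assume "v \<in> set ?s"
      then obtain u where u: "u \<in> set (butlast s)" "v = sh ?a u" by auto
      then have "1 \<le> u" "u \<le> Suc (k - 1)" "u \<noteq> ?a" using sb by auto
      then show "v \<in> {1..k - 1}" using sh_range[OF a] u(2) by auto
    qed
    show "{1..k - 1} \<subseteq> set ?s"
    proof
      fix v assume v: "v \<in> {1..k - 1}"
      then have "1 \<le> ush ?a v \<and> ush ?a v \<le> Suc (k - 1)" using ush_range[of v "k - 1"] by auto
      then have "ush ?a v \<in> set (butlast s)" using sb ush_ne k0 by auto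
      then have "sh ?a (ush ?a v) \<in> sh ?a ` set (butlast s)" by (rule imageI)
      then show "v \<in> set ?s" by simp
    qed
  qed
  then have per: "is_perm (k - 1) ?s" using d ls by (simp add: is_perm_def)
  have "j \<in> jset ?s \<longleftrightarrow> j \<in> jset s" if j: "j < k" for j
  proof (cases "j = 0")
    case True then show ?thesis by (simp add: jset_def)
  next
    case False
    have t: "take j ?s = map (sh ?a) (take j s)" using j ls by (simp add: take_map take_butlast)
    have "take j s = take j (butlast s)" using j ls by (simp add: take_butlast)
    then have st: "set (take j s) \<subseteq> set (butlast s)" by (metis set_take_subset)
    have "pattern (map (sh ?a) (take j s)) = pattern (take j s)"
    proof (rule pattern_mono)
      fix u v assume "u \<in> set (take j s)" "v \<in> set (take j s)"
      then have "u \<noteq> ?a" "v \<noteq> ?a" using st n by auto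
      then show "(sh ?a u \<le> sh ?a v) = (u \<le> v)" using sh_mono[of v ?a u] by auto
    qed
    then show ?thesis using t j ls False by (auto simp add: jset_def)
  qed
  then show ?thesis using per by blast
qed

lemma ic_lt: assumes "is_perm k s" "n < k" shows "inv_count n s = 0"
proof -
  have e: "{p. is_perm n p \<and> is_involution p \<and> subseq s p} = {}"
    using assms by (auto simp: is_perm_def)
  show ?thesis unfolding inv_count_def e by simp
qed

lemma ic_eq: assumes "is_perm k s" shows "inv_count k s = (if is_involution s then 1 else 0)"
proof -
  have e: "{p. is_perm k p \<and> is_involution p \<and> subseq s p} = (if is_involution s then {s} else {})"
  proof -
    have "p = s" if "is_perm k p" "subseq s p" for p
      using subseq_same_length[OF that(2)] that(1) assms by (simp add: is_perm_def)
    then show ?thesis using assms by auto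
  qed
  show ?thesis unfolding inv_count_def e by simp
qed

lemma conv_perm: assumes "is_perm k s" "k \<le> n" shows "inv_count n s = card (FA n s)"
  using conv[of s n] assms by (auto simp: is_perm_def)

lemma formula: "is_perm k s \<Longrightarrow> inv_count n s = GG n k (jset s)"
proof (induction n arbitrary: k s rule: less_induct)
  case (less n)
  note p = less.prems
  define J where "J = jset s"
  define q where "q = ind k J"
  show ?case
  proof (cases "n < k")
    case True then show ?thesis using ic_lt[OF p] by (simp add: GG_def)
  next
    case nk: False
    show ?thesis
    proof (cases "n = k")
      case True
      have "GG n k (jset s) = ind k (jset s) 0" using True by (simp add: GG_def cc_def hh_0)
      also have "\<dots> = (if is_involution s then 1 else 0)" using jset_k[OF p] by (simp add: ind_def)
      finally show ?thesis using ic_eq[OF p] True by simp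
    next
      case False
      then obtain M where n: "n = Suc M" and kM: "k < Suc M" using nk by (cases n) auto
      let ?s = "map (sh (last s)) (butlast s)"
      have r: "inv_count n s = card (FA M s) + (M - k) * card (FA (M - 1) s)
         + (if k = 0 then 0 else card (FA (M - 1) ?s))"
        using conv_perm[OF p, of n] card_rec[OF p kM] n kM by simp
      have t1: "card (FA M s) = cc q (M - k)"
      proof -
        have "card (FA M s) = inv_count M s" using conv_perm[OF p, of M] kM by simp
        also have "\<dots> = GG M k J" using less.IH[of M k s] p n J_def by simp
        finally show ?thesis using kM by (simp add: GG_def q_def)
      qed
      have t2: "(M - k) * card (FA (M - 1) s) = (M - k) * cc q (M - k - 1)"
      proof (cases "M = k")
        case True then show ?thesis by simp
      next
        case False
        then have kM1: "k \<le> M - 1" using kM by simp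
        have "card (FA (M - 1) s) = inv_count (M - 1) s" using conv_perm[OF p kM1] by simp
        also have "\<dots> = GG (M - 1) k J" using less.IH[of "M - 1" k s] p n J_def by simp
        also have "\<dots> = cc q (M - k - 1)" using kM1 by (simp add: GG_def q_def)
        finally show ?thesis by simp
      qed
      have t3: "(if k = 0 then 0 else card (FA (M - 1) ?s)) = cc (\<lambda>e. q (Suc e)) (M - k)"
      proof (cases "k = 0")
        case True
        then have "(\<lambda>e. q (Suc e)) = (\<lambda>e. 0)" by (simp add: q_def ind_def)
        then show ?thesis using True by (simp add: cc_def)
      next
        case False
        note jp = jset_prime[OF p False]
        have ps: "is_perm (k - 1) ?s" using jp by (rule conjunct1)
        have jq: "\<forall>j<k. j \<in> jset ?s \<longleftrightarrow> j \<in> jset s" using jp by (rule conjunct2)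
        have kM1: "k - 1 \<le> M - 1" using kM by simp
        have "card (FA (M - 1) ?s) = inv_count (M - 1) ?s" using conv_perm[OF ps kM1] by simp
        also have "\<dots> = GG (M - 1) (k - 1) (jset ?s)" using less.IH[of "M - 1" "k - 1" ?s] ps n by simp
        also have "\<dots> = cc (ind (k - 1) (jset ?s)) (M - k)" using kM1 False by (simp add: GG_def)
        also have "ind (k - 1) (jset ?s) = (\<lambda>e. q (Suc e))"
        proof
          fix e
          show "ind (k - 1) (jset ?s) e = q (Suc e)"
          proof (cases "e \<le> k - 1")
            case True
            have "k - Suc e < k" using False by simp
            then have "(k - Suc e \<in> jset ?s) = (k - Suc e \<in> J)" using jq unfolding J_def by simp
            moreover have "k - 1 - e = k - Suc e" by simp
            ultimately show ?thesis using True False unfolding q_def ind_def by simp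
          next
            case False
            then have "\<not> Suc e \<le> k" by arith
            then show ?thesis using False by (simp add: q_def ind_def)
          qed
        qed
        finally show ?thesis using False by simp
      qed
      have "GG n k (jset s) = cc q (Suc (M - k))"
        using n kM by (simp add: GG_def q_def J_def Suc_diff_le)
      also have "\<dots> = cc q (M - k) + (M - k) * cc q (M - k - 1) + cc (\<lambda>e. q (Suc e)) (M - k)"
        by (rule cc_rec)
      finally show ?thesis using r t1 t2 t3 by simp
    qed
  qed
qed

theorem mainTheorem8:
  fixes \<sigma> \<tau> :: "nat list" and k k' :: nat
  assumes "is_perm k \<sigma>" and "is_perm k' \<tau>"
  shows "(\<forall>n. inv_count n \<sigma> = inv_count n \<tau>) \<longleftrightarrow> (k = k' \<and> jset \<sigma> = jset \<tau>)"
proof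
  assume h: "\<forall>n. inv_count n \<sigma> = inv_count n \<tau>"
  have eq: "\<And>n. GG n k (jset \<sigma>) = GG n k' (jset \<tau>)"
    using h formula[OF assms(1)] formula[OF assms(2)] by simp
  have l: "length \<sigma> = k" "length \<tau> = k'" using assms by (auto simp: is_perm_def)
  have J1: "jset \<sigma> \<subseteq> {..k}" "0 \<in> jset \<sigma>" using jset_sub[of \<sigma>] l by auto
  have J2: "jset \<tau> \<subseteq> {..k'}" "0 \<in> jset \<tau>" using jset_sub[of \<tau>] l by auto
  show "k = k' \<and> jset \<sigma> = jset \<tau>"
  proof (cases "k \<le> k'")
    case True then show ?thesis using determ_le[OF J1 J2 True eq] by blast
  next
    case False
    then have "k' \<le> k" by simp
    then show ?thesis using determ_le[OF J2 J1 _ eq[symmetric]] by blast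
  qed
next
  assume "k = k' \<and> jset \<sigma> = jset \<tau>"
  then show "\<forall>n. inv_count n \<sigma> = inv_count n \<tau>"
    using formula[OF assms(1)] formula[OF assms(2)] by simp
qed

end
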